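(* Let $n\in\mathbb N$ and let $(M,d)$ be a metric space with $d(x,y)\in\{0,1,\dots,n\}$ for all $x,y\in M$. Let $\mu\in ba(\widetilde M)$ be positive, let $\gamma\in(0,1)$, and let $A\subseteq\widetilde M$ be $\gamma$-cyclically monotonic. Then there exists a cyclically monotonic subset $B\subseteq A$ with $\mu(B)\ge\mu(A)-2n(1-\gamma)\mu(\widetilde M)$.
   Context: $\widetilde M=\{(x,y)\in M\times M:x\ne y\}$. $ba(\widetilde M)$ denotes the bounded finitely additive signed measures on the power set of $\widetilde M$. For $\gamma\in(0,1]$, $A\subseteq\widetilde M$ is $\gamma$-cyclically monotonic if for every finite sequence $(x_1,y_1),\dots,(x_k,y_k)\in A$, with $y_{k+1}=y_1$, $\sum_{i=1}^k\min\{d(x_i,y_{i+1})-\gamma d(x_i,y_i),\,d(y_i,y_{i+1})\}\ge0$. $A$ is cyclically monotonic if for every such finite sequence $\sum_{i=1}^k d(x_i,y_{i+1})\ge\sum_{i=1}^k d(x_i,y_i)$ (equivalently, $1$-cyclically monotonic). *)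

theory Defs
  imports "HOL-Analysis.Analysis"
begin

definition Mtilde :: "'a set \<Rightarrow> ('a \<times> 'a) set" where
  "Mtilde M = {(x, y). x \<in> M \<and> y \<in> M \<and> x \<noteq> y}"

text \<open>Bounded finitely additive signed measures on the power set of a set S
  (values on sets outside Pow S are irrelevant).\<close>
definition ba :: "'b set \<Rightarrow> ('b set \<Rightarrow> real) set" where
  "ba S = {\<mu>. (\<forall>E F. E \<subseteq> S \<longrightarrow> F \<subseteq> S \<longrightarrow> E \<inter> F = {} \<longrightarrow> \<mu> (E \<union> F) = \<mu> E + \<mu> F)
              \<and> (\<exists>C. \<forall>E. E \<subseteq> S \<longrightarrow> \<bar>\<mu> E\<bar> \<le> C)}"

definition positive_on :: "'b set \<Rightarrow> ('b set \<Rightarrow> real) \<Rightarrow> bool" where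
  "positive_on S \<mu> \<longleftrightarrow> (\<forall>E. E \<subseteq> S \<longrightarrow> 0 \<le> \<mu> E)"

text \<open>A finite sequence (x_1,y_1),...,(x_k,y_k) is given by x,y :: nat => 'a on indices 0..k-1,
  with y_{k+1} = y_1 realised by index (i+1) mod k.\<close>
definition gamma_cyclically_monotonic ::
  "('a \<Rightarrow> 'a \<Rightarrow> real) \<Rightarrow> real \<Rightarrow> ('a \<times> 'a) set \<Rightarrow> bool" where
  "gamma_cyclically_monotonic d \<gamma> A \<longleftrightarrow>
     (\<forall>k::nat. \<forall>x y :: nat \<Rightarrow> 'a. 1 \<le> k \<longrightarrow> (\<forall>i<k. (x i, y i) \<in> A) \<longrightarrow>
        0 \<le> (\<Sum>i<k. min (d (x i) (y ((i + 1) mod k)) - \<gamma> * d (x i) (y i))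
                         (d (y i) (y ((i + 1) mod k)))))"

definition cyclically_monotonic ::
  "('a \<Rightarrow> 'a \<Rightarrow> real) \<Rightarrow> ('a \<times> 'a) set \<Rightarrow> bool" where
  "cyclically_monotonic d A \<longleftrightarrow>
     (\<forall>k::nat. \<forall>x y :: nat \<Rightarrow> 'a. 1 \<le> k \<longrightarrow> (\<forall>i<k. (x i, y i) \<in> A) \<longrightarrow>
        (\<Sum>i<k. d (x i) (y i)) \<le> (\<Sum>i<k. d (x i) (y ((i + 1) mod k))))"

end

theory Submission
  imports Defs
begin

lemma ba_add: "\<mu> \<in> ba S \<Longrightarrow> E \<subseteq> S \<Longrightarrow> F \<subseteq> S \<Longrightarrow> E \<inter> F = {} \<Longrightarrow> \<mu> (E \<union> F) = \<mu> E + \<mu> F"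
  unfolding ba_def by blast

lemma ba_empty: "\<mu> \<in> ba S \<Longrightarrow> \<mu> {} = 0"
  using ba_add[of \<mu> S "{}" "{}"] by simp

lemma ba_diff:
  assumes "\<mu> \<in> ba S" "E \<subseteq> F" "F \<subseteq> S"
  shows "\<mu> (F - E) = \<mu> F - \<mu> E"
proof -
  have F: "F = E \<union> (F - E)" using assms(2) by blast
  have "\<mu> (E \<union> (F - E)) = \<mu> E + \<mu> (F - E)"
    by (rule ba_add[OF assms(1)]) (use assms in auto)
  then show ?thesis using F by simp
qed

lemma ba_mono:
  assumes "\<mu> \<in> ba S" "positive_on S \<mu>" "E \<subseteq> F" "F \<subseteq> S"
  shows "\<mu> E \<le> \<mu> F"
proof -
  have "0 \<le> \<mu> (F - E)" using assms(2,4) unfolding positive_on_def by blast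
  then show ?thesis using ba_diff[OF assms(1,3,4)] by simp
qed

lemma ba_sum: "\<mu> \<in> ba S \<Longrightarrow> (\<forall>j<(m::nat). R j \<subseteq> S) \<Longrightarrow> (\<forall>i<m. \<forall>j<m. i \<noteq> j \<longrightarrow> R i \<inter> R j = {})
  \<Longrightarrow> (\<Sum>j<m. \<mu> (R j)) = \<mu> (\<Union>j<m. R j)"
proof (induction m)
  case 0 then show ?case by (simp add: ba_empty)
next
  case (Suc m)
  have "(\<Union>j<Suc m. R j) = (\<Union>j<m. R j) \<union> R m" by (auto simp: lessThan_Suc)
  moreover have "(\<Union>j<m. R j) \<inter> R m = {}" using Suc.prems(3) by (auto, metis IntI less_Suc_eq less_irrefl_nat empty_iff)
  moreover have "(\<Union>j<m. R j) \<subseteq> S" using Suc.prems(2) by (meson UN_least less_SucI lessThan_iff)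
  ultimately have "\<mu> (\<Union>j<Suc m. R j) = \<mu> (\<Union>j<m. R j) + \<mu> (R m)"
    using ba_add[OF Suc.prems(1)] Suc.prems(2) by auto
  then show ?case using Suc by simp
qed

lemma floor_diff_le: "a - b \<le> of_int D \<Longrightarrow> \<lfloor>a\<rfloor> - \<lfloor>b::real\<rfloor> \<le> D"
proof -
  assume h: "a - b \<le> of_int D"
  have "real_of_int \<lfloor>a\<rfloor> \<le> a" "b < real_of_int \<lfloor>b\<rfloor> + 1" by linarith+
  then have "real_of_int (\<lfloor>a\<rfloor> - \<lfloor>b\<rfloor>) < real_of_int (D + 1)" using h by (simp only: of_int_diff of_int_add of_int_1)
  then show ?thesis by linarith
qed

lemma round_lemma:
  fixes a b t t' s0 :: real and D :: int
  assumes "of_int D - (a - b) \<le> s0" "s0 \<le> t' - t" "t' - t \<le> 1 - s0"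
    "\<lfloor>a+t\<rfloor> - \<lfloor>b+t\<rfloor> < D"
  shows "\<lfloor>a+t'\<rfloor> - \<lfloor>b+t'\<rfloor> \<ge> D"
proof -
  define F where "F = \<lfloor>b+t\<rfloor>"
  have "\<lfloor>a+t\<rfloor> \<le> F + D - 1" using assms(4) F_def by simp
  then have "a + t < of_int F + of_int D" by linarith
  then have r: "b + t - of_int F < s0" using assms(1) by linarith
  have "of_int F \<le> b + t" using F_def by linarith
  then have "b + t' < of_int F + 1" "of_int F + s0 \<le> b + t'" using r assms(2,3) by linarith+
  then have "\<lfloor>b+t'\<rfloor> \<le> F" "of_int (F + D) \<le> a + t'" using assms(1) by (simp add: floor_le_iff, linarith)
  then have "\<lfloor>b+t'\<rfloor> \<le> F" "F + D \<le> \<lfloor>a + t'\<rfloor>" by (simp_all add: le_floor_iff)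
  then show ?thesis by linarith
qed

lemma sum_mod_shift: "1 \<le> (k::nat) \<Longrightarrow> (\<Sum>i<k. f ((i+1) mod k)) = (\<Sum>i<k. (f i :: real))"
proof -
  assume "1 \<le> k"
  then obtain m where k: "k = Suc m" by (cases k) auto
  have "(\<Sum>i<k. f ((i+1) mod k)) = (\<Sum>i<m. f ((i+1) mod k)) + f 0" by (simp add: k)
  also have "(\<Sum>i<m. f ((i+1) mod k)) = (\<Sum>i<m. f (Suc i))" by (rule sum.cong) (auto simp: k)
  also have "\<dots> + f 0 = (\<Sum>i<k. f i)" unfolding k sum.lessThan_Suc_shift by simp
  finally show ?thesis .
qed

fun ccost :: "('a \<Rightarrow> 'a \<Rightarrow> real) \<Rightarrow> real \<Rightarrow> 'a \<Rightarrow> ('a \<times> 'a) list \<Rightarrow> 'a \<Rightarrow> real" where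
  "ccost d g z [] w = d z w"
| "ccost d g z ((x,y)#ps) w = d z y - g * d x y + ccost d g x ps w"

lemma ccost_formula: "ps \<noteq> [] \<Longrightarrow> ccost d g z ps w = d z (snd (ps!0)) +
   (\<Sum>i<length ps. - g * d (fst (ps!i)) (snd (ps!i)) +
       (if Suc i < length ps then d (fst (ps!i)) (snd (ps!Suc i)) else d (fst (ps!i)) w))"
proof (induction ps arbitrary: z)
  case Nil then show ?case by simp
next
  case (Cons a ps)
  obtain x y where a: "a = (x,y)" by (cases a)
  show ?case
  proof (cases "ps = []")
    case True then show ?thesis by (simp add: a)
  next
    case False
    have "ccost d g z (a#ps) w = d z y - g * d x y + ccost d g x ps w" by (simp add: a)
    also have "\<dots> = d z y - g * d x y + d x (snd (ps!0)) +
   (\<Sum>i<length ps. - g * d (fst (ps!i)) (snd (ps!i)) +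
       (if Suc i < length ps then d (fst (ps!i)) (snd (ps!Suc i)) else d (fst (ps!i)) w))"
      using Cons.IH[OF False] by simp
    also have "\<dots> = d z (snd ((a#ps)!0)) +
   (\<Sum>i<length (a#ps). - g * d (fst ((a#ps)!i)) (snd ((a#ps)!i)) +
       (if Suc i < length (a#ps) then d (fst ((a#ps)!i)) (snd ((a#ps)!Suc i)) else d (fst ((a#ps)!i)) w))"
      unfolding length_Cons sum.lessThan_Suc_shift nth_Cons_Suc nth_Cons_0 Suc_less_eq a fst_conv snd_conv
      using False by (simp only: length_greater_0_conv if_True not_False_eq_True)
    finally show ?thesis .
  qed
qed

lemma ccost_cycle:
  assumes ms: "Metric_space M d" and AM: "A \<subseteq> Mtilde M" and cm: "gamma_cyclically_monotonic d g A"
    and ps: "set ps \<subseteq> A" "ps \<noteq> []" and zw: "z \<in> M" "w \<in> M"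
  shows "0 \<le> ccost d g z ps w + d w z"
proof -
  define k where "k = length ps"
  define X where "X i = fst (ps!i)" for i
  define Y where "Y i = snd (ps!i)" for i
  have k1: "1 \<le> k" using ps k_def by (cases ps) auto
  have inA: "\<forall>i<k. (X i, Y i) \<in> A" using ps(1) unfolding X_def Y_def k_def by auto
  then have inM: "X i \<in> M" "Y i \<in> M" if "i < k" for i using AM that unfolding Mtilde_def by auto
  have "0 \<le> (\<Sum>i<k. min (d (X i) (Y ((i + 1) mod k)) - g * d (X i) (Y i)) (d (Y i) (Y ((i + 1) mod k))))"
    using cm k1 inA unfolding gamma_cyclically_monotonic_def by blast
  also have "\<dots> \<le> (\<Sum>i<k. d (X i) (Y ((i + 1) mod k)) - g * d (X i) (Y i))"
    by (rule sum_mono) simp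
  also have "\<dots> \<le> ccost d g z ps w + d w z"
  proof -
    obtain m where km: "k = Suc m" using k1 by (cases k) auto
    have e1: "(\<Sum>i<k. d (X i) (Y ((i + 1) mod k)) - g * d (X i) (Y i))
       = (\<Sum>i<m. d (X i) (Y (Suc i)) - g * d (X i) (Y i)) + (d (X m) (Y 0) - g * d (X m) (Y m))"
      unfolding km sum.lessThan_Suc by (simp add: km[symmetric], rule sum.cong, auto simp: km)
    have e2: "ccost d g z ps w = d z (Y 0) + (\<Sum>i<m. - g * d (X i) (Y i) + d (X i) (Y (Suc i)))
       + (- g * d (X m) (Y m) + d (X m) w)"
      unfolding ccost_formula[OF ps(2)] X_def[symmetric] Y_def[symmetric] k_def[symmetric]
        km sum.lessThan_Suc by simp
    have "d (X m) (Y 0) \<le> d (X m) w + d w (Y 0)" using ms inM km zw by (simp add: Metric_space.triangle)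
    moreover have "d w (Y 0) \<le> d w z + d z (Y 0)" using ms inM km zw by (simp add: Metric_space.triangle)
    ultimately show ?thesis unfolding e1 e2 by (simp add: algebra_simps)
  qed
  finally show ?thesis .
qed

lemma ccost_lip:
  assumes ms: "Metric_space M d" and AM: "A \<subseteq> Mtilde M" and "set ps \<subseteq> A" "u \<in> M" "v \<in> M" "w \<in> M"
  shows "ccost d g u ps w \<le> d u v + ccost d g v ps w"
proof (cases ps)
  case Nil then show ?thesis using assms by (simp add: Metric_space.triangle)
next
  case (Cons a qs)
  obtain x y where a: "a = (x,y)" by (cases a)
  have "y \<in> M" using assms Cons a unfolding Mtilde_def by auto
  then have "d u y \<le> d u v + d v y" using assms by (simp add: Metric_space.triangle)
  then show ?thesis using Cons a by simp
qed

lemma potential_exists: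
  assumes ms: "Metric_space M d" and bd: "\<forall>x\<in>M. \<forall>y\<in>M. d x y \<le> n"
    and AM: "A \<subseteq> Mtilde M" and cm: "gamma_cyclically_monotonic d g A"
  shows "\<exists>p. (\<forall>u\<in>M. \<forall>v\<in>M. p v - p u \<le> d u v) \<and> (\<forall>x y. (x,y) \<in> A \<longrightarrow> g * d x y \<le> p y - p x)"
proof -
  define S where "S z = {ccost d g z ps w | ps w. set ps \<subseteq> A \<and> w \<in> M}" for z
  define G where "G z = Inf (S z)" for z
  have ne: "S z \<noteq> {}" if "z \<in> M" for z
  proof -
    have "ccost d g z [] z \<in> S z" using that unfolding S_def by fastforce
    then show ?thesis by blast
  qed
  have bdd: "bdd_below (S z)" if "z \<in> M" for z
  proof (rule bdd_belowI[of _ "- n"])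
    fix c assume "c \<in> S z"
    then obtain ps w where c: "c = ccost d g z ps w" "set ps \<subseteq> A" "w \<in> M" unfolding S_def by blast
    show "- n \<le> c"
    proof (cases "ps = []")
      case True
      have "0 \<le> d z z" "d z z \<le> n" "0 \<le> d z w" using bd that Metric_space.nonneg[OF ms] by auto
      moreover have "c = d z w" using c True by simp
      ultimately show ?thesis by linarith
    next
      case False
      have "0 \<le> ccost d g z ps w + d w z" by (rule ccost_cycle[OF ms AM cm c(2) False that c(3)])
      moreover have "d w z \<le> n" using bd that c(3) by blast
      ultimately show ?thesis using c(1) by linarith
    qed
  qed
  have lower: "G z \<le> ccost d g z ps w" if "z \<in> M" "set ps \<subseteq> A" "w \<in> M" for z ps w
    unfolding G_def by (rule cInf_lower[OF _ bdd[OF that(1)]]) (use that in \<open>auto simp: S_def\<close>)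
  have lip: "G u \<le> d u v + G v" if "u \<in> M" "v \<in> M" for u v
  proof -
    have "G u - d u v \<le> G v" unfolding G_def[of v]
    proof (rule cInf_greatest[OF ne[OF that(2)]])
      fix c assume "c \<in> S v"
      then obtain ps w where c: "c = ccost d g v ps w" "set ps \<subseteq> A" "w \<in> M" unfolding S_def by blast
      have "G u \<le> ccost d g u ps w" using lower that c by blast
      also have "\<dots> \<le> d u v + c" using ccost_lip[OF ms AM c(2) that c(3)] c(1) by simp
      finally show "G u - d u v \<le> c" by simp
    qed
    then show ?thesis by simp
  qed
  have pair: "G y + g * d x y \<le> G x" if "(x,y) \<in> A" for x y
  proof -
    have xy: "x \<in> M" "y \<in> M" using that AM unfolding Mtilde_def by auto
    have "G y + g * d x y \<le> G x" unfolding G_def[of x]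
    proof (rule cInf_greatest[OF ne[OF xy(1)]])
      fix c assume "c \<in> S x"
      then obtain ps w where c: "c = ccost d g x ps w" "set ps \<subseteq> A" "w \<in> M" unfolding S_def by blast
      have "G y \<le> ccost d g y ((x,y)#ps) w" using lower[of y "(x,y)#ps" w] xy c that by simp
      also have "\<dots> = - g * d x y + c" using c xy ms by (simp add: Metric_space.zero)
      finally show "G y + g * d x y \<le> c" by simp
    qed
    then show ?thesis .
  qed
  show ?thesis
  proof (intro exI[of _ "\<lambda>z. - G z"] conjI ballI allI impI)
    fix u v assume "u \<in> M" "v \<in> M"
    then have "G u \<le> d u v + G v" by (rule lip)
    then show "- G v - - G u \<le> d u v" by simp
  next
    fix x y assume "(x,y) \<in> A"
    then have "G y + g * d x y \<le> G x" by (rule pair)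
    then show "g * d x y \<le> - G y - - G x" by simp
  qed
qed

lemma cm_empty: "cyclically_monotonic d {}"
  unfolding cyclically_monotonic_def
proof (intro allI impI)
  fix k :: nat and x y :: "nat \<Rightarrow> 'a"
  assume "1 \<le> k" "\<forall>i<k. (x i, y i) \<in> {}"
  then have "0 < k" "\<forall>i<k. (x i, y i) \<in> {}" by auto
  then have "(x 0, y 0) \<in> {}" by blast
  then show "(\<Sum>i<k. d (x i) (y i)) \<le> (\<Sum>i<k. d (x i) (y ((i + 1) mod k)))" by simp
qed

theorem lemma2p7:
  fixes n :: nat and M :: "'a set" and d :: "'a \<Rightarrow> 'a \<Rightarrow> real"
    and \<mu> :: "('a \<times> 'a) set \<Rightarrow> real" and \<gamma> :: real and A :: "('a \<times> 'a) set"
  assumes "Metric_space M d"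
    and "\<forall>x\<in>M. \<forall>y\<in>M. \<exists>j::nat. j \<le> n \<and> d x y = real j"
    and "\<mu> \<in> ba (Mtilde M)" and "positive_on (Mtilde M) \<mu>"
    and "0 < \<gamma>" and "\<gamma> < 1"
    and "A \<subseteq> Mtilde M" and "gamma_cyclically_monotonic d \<gamma> A"
  shows "\<exists>B. B \<subseteq> A \<and> cyclically_monotonic d B \<and>
           \<mu> B \<ge> \<mu> A - 2 * real n * (1 - \<gamma>) * \<mu> (Mtilde M)"
proof -
  note ms = assms(1) and dint = assms(2) and ba = assms(3) and pos = assms(4)
    and AM = assms(7) and gcm = assms(8)
  have bd: "\<forall>x\<in>M. \<forall>y\<in>M. d x y \<le> real n" using dint by fastforce
  have mu0: "\<mu> {} = 0" using ba by (rule ba_empty)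
  have muA: "\<mu> A \<le> \<mu> (Mtilde M)" using ba_mono[OF ba pos AM] by simp
  have muM: "0 \<le> \<mu> (Mtilde M)" using pos unfolding positive_on_def by simp
  show ?thesis
  proof (cases "1 \<le> 2 * real n * (1 - \<gamma>)")
    case True
    have "1 * \<mu> (Mtilde M) \<le> 2 * real n * (1 - \<gamma>) * \<mu> (Mtilde M)"
      by (rule mult_right_mono[OF True muM])
    then have "\<mu> {} \<ge> \<mu> A - 2 * real n * (1 - \<gamma>) * \<mu> (Mtilde M)" using mu0 muA by simp
    then show ?thesis using cm_empty[of d] by blast
  next
    case False
    show ?thesis
    proof (cases "n = 0")
      case True
      have "A = {}"
      proof (rule ccontr)
        assume "A \<noteq> {}"
        then obtain x y where xy: "(x,y) \<in> A" by auto
        then have "x \<in> M" "y \<in> M" "x \<noteq> y" using AM unfolding Mtilde_def by auto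
        moreover have "d x y = 0" using dint True \<open>x \<in> M\<close> \<open>y \<in> M\<close> by fastforce
        ultimately show False using Metric_space.zero[OF ms] by blast
      qed
      then show ?thesis using cm_empty[of d] True by auto
    next
      case n0: False
      define c where "c = real n * (1 - \<gamma>)"
      have cpos: "0 < c" using n0 assms(6) unfolding c_def by simp
      have c2: "2 * c < 1" using False unfolding c_def by simp
      define x0 where "x0 = 1 / c"
      have x0: "2 < x0" using cpos c2 unfolding x0_def by (simp add: field_simps)
      define m where "m = nat \<lfloor>x0\<rfloor>"
      have m1: "real m \<le> x0" "x0 - 1 < real m" using x0 unfolding m_def by linarith+
      have m2: "2 \<le> m" using x0 unfolding m_def by linarith
      define s0 where "s0 = 1 / real m"
      have s0a: "c \<le> s0"
      proof -
        have "1 / x0 \<le> 1 / real m" using m1 m2 by (simp add: frac_le)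
        then show ?thesis unfolding s0_def x0_def using cpos by simp
      qed
      have s0b: "s0 \<le> 2 * c"
      proof -
        have h1: "x0 / 2 \<le> real m" using m1 x0 by linarith
        have h2: "0 < real m * (x0 / 2)" using x0 m2 by simp
        have "1 / real m \<le> 1 / (x0 / 2)" by (rule divide_left_mono[OF h1 _ h2]) simp
        moreover have "1 / (x0 / 2) = 2 * c" unfolding x0_def by simp
        ultimately show ?thesis unfolding s0_def by simp
      qed
      obtain p where plip: "\<forall>u\<in>M. \<forall>v\<in>M. p v - p u \<le> d u v"
        and ppair: "\<forall>x y. (x,y) \<in> A \<longrightarrow> \<gamma> * d x y \<le> p y - p x"
        using potential_exists[OF ms bd AM gcm] by blast
      define G where "G j z = \<lfloor>p z + real j / real m\<rfloor>" for j :: nat and z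
      define B where "B j = {(x,y) \<in> A. real_of_int (G j y - G j x) = d x y}" for j
      define R where "R j = A - B j" for j
      have GL: "real_of_int (G j v - G j u) \<le> d u v" if "u \<in> M" "v \<in> M" for j u v
      proof -
        have "\<exists>j::nat. j \<le> n \<and> d u v = real j" using dint that by simp
        then obtain D :: nat where D: "d u v = real D" by auto
        have "p v - p u \<le> d u v" using plip that by blast
        then have "(p v + real j / real m) - (p u + real j / real m) \<le> of_int (int D)"
          using D by simp
        then have "G j v - G j u \<le> int D" unfolding G_def by (rule floor_diff_le)
        then show ?thesis using D by simp
      qed
      have BA: "B j \<subseteq> A" for j unfolding B_def by auto
      have CM: "cyclically_monotonic d (B j)" for j
        unfolding cyclically_monotonic_def
      proof (intro allI impI)
        fix k :: nat and x y :: "nat \<Rightarrow> 'a"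
        assume k: "1 \<le> k" and inB: "\<forall>i<k. (x i, y i) \<in> B j"
        have inM: "x i \<in> M" "y i \<in> M" if "i < k" for i
          using inB that BA AM unfolding Mtilde_def by blast+
        define h where "h i = real_of_int (G j (y i))" for i
        define l where "l i = real_of_int (G j (x i))" for i
        have "(\<Sum>i<k. d (x i) (y i)) = (\<Sum>i<k. h i - l i)"
          by (rule sum.cong) (use inB in \<open>auto simp: B_def h_def l_def\<close>)
        also have "\<dots> = (\<Sum>i<k. h i) - (\<Sum>i<k. l i)" by (simp add: sum_subtractf)
        also have "\<dots> = (\<Sum>i<k. h ((i+1) mod k)) - (\<Sum>i<k. l i)" using sum_mod_shift[OF k, of h] by simp
        also have "\<dots> = (\<Sum>i<k. h ((i+1) mod k) - l i)" by (simp add: sum_subtractf)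
        also have "\<dots> \<le> (\<Sum>i<k. d (x i) (y ((i + 1) mod k)))"
        proof (rule sum_mono)
          fix i assume "i \<in> {..<k}"
          then have "i < k" "(i+1) mod k < k" using k by auto
          then show "h ((i+1) mod k) - l i \<le> d (x i) (y ((i + 1) mod k))"
            using GL[OF inM(1) inM(2), of i "(i+1) mod k" j] unfolding h_def l_def by simp
        qed
        finally show "(\<Sum>i<k. d (x i) (y i)) \<le> (\<Sum>i<k. d (x i) (y ((i + 1) mod k)))" .
      qed
      have disj1: "R i \<inter> R j = {}" if ij: "i < j" "j < m" for i j
      proof (rule ccontr)
        assume "R i \<inter> R j \<noteq> {}"
        then obtain x y where xy: "(x,y) \<in> R i" "(x,y) \<in> R j" by auto
        then have xyA: "(x,y) \<in> A" unfolding R_def by auto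
        then have xyM: "x \<in> M" "y \<in> M" using AM unfolding Mtilde_def by auto
        have "\<exists>j::nat. j \<le> n \<and> d x y = real j" using dint xyM by simp
        then obtain D :: nat where D: "D \<le> n" "d x y = real D" by auto
        have bad_i: "G i y - G i x < int D"
        proof -
          have "real_of_int (G i y - G i x) \<le> real D" using GL[OF xyM, of i] D by simp
          moreover have "real_of_int (G i y - G i x) \<noteq> real D" using xy xyA D unfolding R_def B_def by auto
          ultimately show ?thesis by linarith
        qed
        have "\<gamma> * d x y \<le> p y - p x" using ppair xyA by blast
        then have e1: "\<gamma> * real D \<le> p y - p x" using D(2) by simp
        have "(1 - \<gamma>) * real D \<le> (1 - \<gamma>) * real n" using D assms(6) by (intro mult_left_mono) auto
        then have e2: "of_int (int D) - (p y - p x) \<le> s0" using e1 s0a unfolding c_def by (simp add: algebra_simps)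
        have ji: "1 \<le> real j - real i" "real j - real i \<le> real m - 1" using ij by auto
        have "s0 \<le> real j / real m - real i / real m"
          unfolding s0_def diff_divide_distrib[symmetric] using ji m2 by (intro divide_right_mono) auto
        moreover have "real j / real m - real i / real m \<le> 1 - s0"
        proof -
          have "(real j - real i) / real m \<le> (real m - 1) / real m" using ji m2 by (intro divide_right_mono) auto
          also have "\<dots> = 1 - s0" unfolding s0_def using m2 by (simp add: field_simps)
          finally show ?thesis by (simp add: diff_divide_distrib)
        qed
        moreover have "\<lfloor>p y + real i / real m\<rfloor> - \<lfloor>p x + real i / real m\<rfloor> < int D"
          using bad_i unfolding G_def .
        ultimately have "\<lfloor>p y + real j / real m\<rfloor> - \<lfloor>p x + real j / real m\<rfloor> \<ge> int D"
          using round_lemma[OF e2] by blast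
        then have "G j y - G j x \<ge> int D" unfolding G_def .
        moreover have "real_of_int (G j y - G j x) \<le> real D" using GL[OF xyM, of j] D by simp
        ultimately have "real_of_int (G j y - G j x) = d x y" using D by simp
        then have "(x,y) \<in> B j" using xyA unfolding B_def by simp
        then show False using xy unfolding R_def by simp
      qed
      have disj: "\<forall>i<m. \<forall>j<m. i \<noteq> j \<longrightarrow> R i \<inter> R j = {}"
        using disj1 by (metis Int_commute linorder_neqE_nat)
      have RS: "\<forall>j<m. R j \<subseteq> Mtilde M" using AM unfolding R_def by auto
      have "(\<Sum>j<m. \<mu> (R j)) = \<mu> (\<Union>j<m. R j)" by (rule ba_sum[OF ba RS disj])
      also have "\<dots> \<le> \<mu> (Mtilde M)"
      proof -
        have "(\<Union>j<m. R j) \<subseteq> Mtilde M" using RS by blast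
        then show ?thesis by (rule ba_mono[OF ba pos _ order_refl])
      qed
      finally have sumle: "(\<Sum>j<m. \<mu> (R j)) \<le> \<mu> (Mtilde M)" .
      have "\<exists>j<m. \<mu> (R j) \<le> \<mu> (Mtilde M) / real m"
      proof (rule ccontr)
        assume "\<not> ?thesis"
        then have "\<forall>j<m. \<mu> (Mtilde M) / real m < \<mu> (R j)" by (simp add: not_le)
        then have "(\<Sum>j<m. \<mu> (Mtilde M) / real m) < (\<Sum>j<m. \<mu> (R j))"
          using m2 by (intro sum_strict_mono) (auto simp: lessThan_empty_iff)
        moreover have "(\<Sum>j<m. \<mu> (Mtilde M) / real m) = \<mu> (Mtilde M)" using m2 by simp
        ultimately show False using sumle by simp
      qed
      then obtain j where j: "j < m" "\<mu> (R j) \<le> \<mu> (Mtilde M) / real m" by blast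
      have "\<mu> (R j) = \<mu> A - \<mu> (B j)" unfolding R_def by (rule ba_diff[OF ba BA AM])
      moreover have "\<mu> (Mtilde M) / real m = s0 * \<mu> (Mtilde M)" unfolding s0_def by simp
      moreover have "s0 * \<mu> (Mtilde M) \<le> 2 * c * \<mu> (Mtilde M)" by (rule mult_right_mono[OF s0b muM])
      ultimately have "\<mu> (B j) \<ge> \<mu> A - 2 * real n * (1 - \<gamma>) * \<mu> (Mtilde M)"
        using j unfolding c_def by (simp add: algebra_simps)
      then show ?thesis using BA CM by blast
    qed
  qed
qed

end
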